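(* Let $s\in(0,1)$ and let $K:\mathbb{R}\to[0,+\infty]$ be measurable with $K(x)=K(-x)$ for a.e. $x$ and $\lambda|x|^{-1-2s}\le K(x)\le\Lambda|x|^{-1-2s}$ for a.e. $x$, for some $0<\lambda\le\Lambda$. Define $L_Ku(x):=\mathrm{PV}\int_{\mathbb{R}}(u(y)-u(x))K(x-y)\,dy$. Let $\bar C,\kappa\in(0,+\infty)$ and $\sigma,\tau\in(1,+\infty)$. Let $\phi\in C^{1,1}(\mathbb{R})$ with $\phi(x)\ge\bar C|x|^{-\sigma}$ for $x<-\kappa$ and $\phi(x)\ge\bar C|x|^{-\tau}$ for $x>\kappa$, and $\phi(x)\ge\gamma$ for all $x\in[-\kappa,\kappa]$, for some $\gamma\in(0,+\infty)$. Suppose also that $\lim_{x\to\pm\infty}|x|\phi(x)=0$ and $$\lim_{x\to+\infty}x^3\|\phi''\|_{L^\infty(\frac x2,\frac{3x}2)}=0\quad\text{and}\quad\lim_{x\to-\infty}x^3\|\phi''\|_{L^\infty(\frac{3x}2,\frac x2)}=0.$$ Then $$\liminf_{|x|\to+\infty}|x|^{1+2s}L_K\phi(x)\ge\lambda\left(\frac{\bar C\kappa^{1-\sigma}}{\sigma-1}+\int_{-\kappa}^{\kappa}\phi(y)\,dy+\frac{\bar C\kappa^{1-\tau}}{\tau-1}\right).$$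
   Context: PV denotes the Cauchy principal value. $C^{1,1}(\mathbb{R})$ denotes bounded functions with bounded derivative whose derivative is globally Lipschitz. *)

theory Defs
  imports "HOL-Analysis.Analysis" "HOL-Probability.Essential_Supremum"
begin

definition C11 :: "(real \<Rightarrow> real) \<Rightarrow> bool" where
  "C11 u \<longleftrightarrow> bounded (range u) \<and> (\<forall>x. u differentiable (at x))
     \<and> bounded (range (deriv u))
     \<and> (\<exists>L. \<forall>x y. \<bar>deriv u x - deriv u y\<bar> \<le> L * \<bar>x - y\<bar>)"

definition LK :: "(real \<Rightarrow> ennreal) \<Rightarrow> (real \<Rightarrow> real) \<Rightarrow> real \<Rightarrow> real" where
  "LK K u x = Lim (at_right 0)
     (\<lambda>\<epsilon>. LINT y:{y. \<epsilon> < \<bar>y - x\<bar>}|lborel. (u y - u x) * enn2real (K (x - y)))"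

definition weak_second_deriv :: "(real \<Rightarrow> real) \<Rightarrow> (real \<Rightarrow> real) \<Rightarrow> bool" where
  "weak_second_deriv u \<psi> \<longleftrightarrow> \<psi> \<in> borel_measurable lborel \<and>
     (\<forall>a b. a \<le> b \<longrightarrow> (\<psi> has_integral (deriv u b - deriv u a)) {a..b})"

definition Linf_on :: "(real \<Rightarrow> real) \<Rightarrow> real set \<Rightarrow> ereal" where
  "Linf_on \<psi> A = esssup (restrict_space lborel A) (\<lambda>y. ereal \<bar>\<psi> y\<bar>)"

end

theory Submission
  imports Defs
begin


lemma hk_to_lborel:
  fixes f :: "real \<Rightarrow> real"
  assumes hk: "(f has_integral I) S" and nn: "\<And>x. x \<in> S \<Longrightarrow> 0 \<le> f x"
    and S: "S \<in> sets borel" and fm: "f \<in> borel_measurable borel"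
  shows "set_integrable lborel S f" "(LINT x:S|lborel. f x) = I"
proof -
  have "f absolutely_integrable_on S"
    using nonnegative_absolutely_integrable_1[of f S] hk nn by (auto simp: integrable_on_def)
  then have "integrable lebesgue (\<lambda>x. indicator S x *\<^sub>R f x)"
    by (simp add: set_integrable_def)
  moreover have "(\<lambda>x. indicator S x *\<^sub>R f x) \<in> borel_measurable lborel"
    using S fm by measurable
  ultimately show si: "set_integrable lborel S f"
    unfolding set_integrable_def using integrable_completion by blast
  show "(LINT x:S|lborel. f x) = I"
    using set_borel_integral_eq_integral(2)[OF si] hk by (simp add: integral_unique)
qed

lemma pow_tail:
  fixes r a :: real
  assumes r: "0 < r" and a: "1 < a"
  shows "integrable lborel (\<lambda>h. indicator {h. r \<le> \<bar>h\<bar>} h * \<bar>h\<bar> powr - a)"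
    "(\<integral>h. indicator {h. r \<le> \<bar>h\<bar>} h * \<bar>h\<bar> powr - a \<partial>lborel) = 2 * (r powr (1 - a) / (a - 1))"
proof -
  have hk: "((\<lambda>x. x powr (-a)) has_integral r powr (1 - a) / (a - 1)) {r..}"
  proof -
    have "- (r powr (1 - a) / (1 - a)) = r powr (1 - a) / (a - 1)"
      by (metis minus_diff_eq minus_divide_right)
    then show ?thesis using has_integral_powr_to_inf[of "-a" r] r a by simp
  qed
  have "set_integrable lborel {r..} (\<lambda>x. x powr (-a))"
       "(LINT x:{r..}|lborel. x powr (-a)) = r powr (1 - a) / (a - 1)"
    using hk_to_lborel[OF hk] by auto
  then have i1: "integrable lborel (\<lambda>h. indicator {r..} h * h powr (-a))"
    and v1: "(\<integral>h. indicator {r..} h * h powr (-a) \<partial>lborel) = r powr (1 - a) / (a - 1)"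
    by (simp_all add: set_integrable_def set_lebesgue_integral_def)
  have i2: "integrable lborel (\<lambda>h. indicator {r..} (0 + -1 * h) * (0 + -1 * h) powr (-a))"
    using lborel_integrable_real_affine[OF i1, of "-1" 0] by simp
  have v2: "(\<integral>h. indicator {r..} (0 + -1 * h) * (0 + -1 * h) powr (-a) \<partial>lborel) = r powr (1 - a) / (a - 1)"
    using lborel_integral_real_affine[of "-1" "\<lambda>h. indicator {r..} h * h powr (-a)" 0] v1 by simp
  have eq: "(\<lambda>h. indicator {h. r \<le> \<bar>h\<bar>} h * \<bar>h\<bar> powr - a) =
     (\<lambda>h. indicator {r..} h * h powr (-a) + indicator {r..} (0 + -1 * h) * (0 + -1 * h) powr (-a))"
    using r by (auto simp: indicator_def fun_eq_iff)
  show "integrable lborel (\<lambda>h. indicator {h. r \<le> \<bar>h\<bar>} h * \<bar>h\<bar> powr - a)"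
    unfolding eq using i1 i2 by simp
  show "(\<integral>h. indicator {h. r \<le> \<bar>h\<bar>} h * \<bar>h\<bar> powr - a \<partial>lborel) = 2 * (r powr (1 - a) / (a - 1))"
    unfolding eq using i1 i2 v1 v2 by (simp add: Bochner_Integration.integral_add)
qed

lemma pow_near:
  fixes r b :: real
  assumes r: "0 \<le> r" and b: "-1 < b"
  shows "integrable lborel (\<lambda>h. indicator {-r..r} h * \<bar>h\<bar> powr b)"
    "(\<integral>h. indicator {-r..r} h * \<bar>h\<bar> powr b \<partial>lborel) = 2 * (r powr (b + 1) / (b + 1))"
proof -
  have hk: "((\<lambda>x. x powr b) has_integral r powr (b + 1) / (b + 1)) {0..r}"
    using has_integral_powr_from_0[OF b r] .
  have hk1: "((\<lambda>x. \<bar>x\<bar> powr b) has_integral r powr (b + 1) / (b + 1)) {0..r}"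
    by (rule has_integral_spike_finite[OF _ _ hk, of "{}"]) auto
  have hk2: "((\<lambda>x. \<bar>x\<bar> powr b) has_integral r powr (b + 1) / (b + 1)) {-r..0}"
  proof -
    have "((\<lambda>x. \<bar>-x\<bar> powr b) has_integral r powr (b + 1) / (b + 1)) {-r..-0}"
      by (subst has_integral_reflect_real) (rule hk1)
    then show ?thesis by (simp del: has_integral_reflect_real)
  qed
  have hk3: "((\<lambda>x. \<bar>x\<bar> powr b) has_integral 2 * (r powr (b + 1) / (b + 1))) {-r..r}"
    using has_integral_combine[OF _ _ hk2 hk1] r by simp
  have m: "(\<lambda>x. \<bar>x\<bar> powr b) \<in> borel_measurable borel" by measurable
  from hk_to_lborel[OF hk3 _ _ m] show
    "integrable lborel (\<lambda>h. indicator {-r..r} h * \<bar>h\<bar> powr b)"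
    "(\<integral>h. indicator {-r..r} h * \<bar>h\<bar> powr b \<partial>lborel) = 2 * (r powr (b + 1) / (b + 1))"
    by (auto simp: set_integrable_def set_lebesgue_integral_def)
qed

lemma pow_seg:
  fixes k R t :: real
  assumes k: "0 < k" "k \<le> R" and t: "1 < t"
  shows "((\<lambda>y. y powr (-t)) has_integral (k powr (1 - t) - R powr (1 - t)) / (t - 1)) {k..R}"
proof -
  define F where "F \<equiv> \<lambda>x::real. x powr (1 - t) / (1 - t)"
  have "((\<lambda>x. x powr (-t)) has_integral (F R - F k)) {k..R}"
    unfolding F_def using assms
    by (intro fundamental_theorem_of_calculus)
       (auto intro!: derivative_eq_intros
               simp flip: has_real_derivative_iff_has_vector_derivative simp: divide_simps)
  moreover have "F R - F k = (k powr (1 - t) - R powr (1 - t)) / (t - 1)"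
    unfolding F_def using t by (simp add: divide_simps) argo
  ultimately show ?thesis by simp
qed



lemma lip_from_psi:
  assumes psi: "weak_second_deriv \<phi> \<psi>"
    and M: "AE y in lborel. y \<in> {c<..<d} \<longrightarrow> \<bar>\<psi> y\<bar> \<le> M" and M0: "0 \<le> M"
    and uv: "c < u" "u \<le> v" "v < d"
  shows "\<bar>deriv \<phi> v - deriv \<phi> u\<bar> \<le> M * (v - u)"
proof -
  have hi: "(\<psi> has_integral (deriv \<phi> v - deriv \<phi> u)) {u..v}"
    using psi uv unfolding weak_second_deriv_def by auto
  have pm[measurable]: "\<psi> \<in> borel_measurable borel"
    using psi unfolding weak_second_deriv_def by simp
  define N where "N = {y \<in> {c<..<d}. M < \<bar>\<psi> y\<bar>}"
  have Nm: "N \<in> sets borel" unfolding N_def by measurable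
  have "AE y in lborel. y \<notin> N" using M unfolding N_def by eventually_elim auto
  then have "N \<in> null_sets lborel"
    using Nm by (subst AE_iff_null_sets) auto
  then have "N \<in> null_sets lebesgue" by (rule null_sets_completionI)
  then have negN: "negligible N" by (simp add: negligible_iff_null_sets)
  define \<psi>' where "\<psi>' = (\<lambda>y. if \<bar>\<psi> y\<bar> \<le> M then \<psi> y else 0)"
  have "(\<psi>' has_integral (deriv \<phi> v - deriv \<phi> u)) {u..v}"
    apply (rule has_integral_spike[OF negN _ hi])
    using uv by (auto simp: \<psi>'_def N_def)
  then have "norm (deriv \<phi> v - deriv \<phi> u) \<le> M * Henstock_Kurzweil_Integration.content {u..v}"
    by (rule has_integral_bound_real[OF M0 finite.emptyI]) (auto simp: \<psi>'_def M0)
  then show ?thesis using uv by simp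
qed

lemma taylor1:
  fixes \<phi> :: "real \<Rightarrow> real"
  assumes d: "\<And>y. (\<phi> has_real_derivative deriv \<phi> y) (at y)"
    and L: "\<And>u v. u \<in> {x - r<..<x + r} \<Longrightarrow> v \<in> {x - r<..<x + r} \<Longrightarrow>
               \<bar>deriv \<phi> v - deriv \<phi> u\<bar> \<le> M * \<bar>v - u\<bar>"
    and h: "\<bar>h\<bar> < r" and M0: "0 \<le> M"
  shows "\<bar>\<phi> (x - h) - \<phi> x + deriv \<phi> x * h\<bar> \<le> M * h\<^sup>2"
proof -
  define g where "g = (\<lambda>t. \<phi> (x - t) - \<phi> x + deriv \<phi> x * t)"
  have dg: "(g has_real_derivative (deriv \<phi> x - deriv \<phi> (x - t))) (at t)" for t
  proof -
    have "((\<lambda>t. \<phi> (x - t)) has_real_derivative deriv \<phi> (x - t) * (0 - 1)) (at t)"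
      by (rule DERIV_chain2[OF d]) (auto intro!: derivative_eq_intros)
    from DERIV_add[OF DERIV_diff[OF this DERIV_const] DERIV_cmult[OF DERIV_ident, of "deriv \<phi> x"]]
    show ?thesis unfolding g_def by simp
  qed
  have g0: "g 0 = 0" by (simp add: g_def)
  have bnd: "\<bar>deriv \<phi> x - deriv \<phi> (x - t)\<bar> \<le> M * \<bar>h\<bar>" if "\<bar>t\<bar> \<le> \<bar>h\<bar>" for t
  proof -
    have "\<bar>deriv \<phi> x - deriv \<phi> (x - t)\<bar> \<le> M * \<bar>x - (x - t)\<bar>"
    proof -
      have "t < r" "-t < r" using that h by arith+
      then show ?thesis using L[of "x - t" x] by (auto simp: abs_minus_commute)
    qed
    also have "\<dots> \<le> M * \<bar>h\<bar>" using that M0 by (simp add: mult_left_mono)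
    finally show ?thesis .
  qed
  have "\<bar>g h\<bar> \<le> M * \<bar>h\<bar> * \<bar>h\<bar>"
  proof (cases "h = 0")
    case True then show ?thesis using g0 by simp
  next
    case False
    show ?thesis
    proof (cases "0 < h")
      case True
      obtain z where z: "0 < z" "z < h" "g h - g 0 = (h - 0) * (deriv \<phi> x - deriv \<phi> (x - z))"
        using MVT2[OF True, of g "\<lambda>t. deriv \<phi> x - deriv \<phi> (x - t)"] dg by blast
      have "\<bar>g h\<bar> = \<bar>h\<bar> * \<bar>deriv \<phi> x - deriv \<phi> (x - z)\<bar>" using z g0 by (simp add: abs_mult)
      also have "\<dots> \<le> \<bar>h\<bar> * (M * \<bar>h\<bar>)" using bnd[of z] z by (intro mult_left_mono) auto
      finally show ?thesis by (simp add: algebra_simps)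
    next
      case False
      with \<open>h \<noteq> 0\<close> have hn: "h < 0" by simp
      obtain z where z: "h < z" "z < 0" "g 0 - g h = (0 - h) * (deriv \<phi> x - deriv \<phi> (x - z))"
        using MVT2[OF hn, of g "\<lambda>t. deriv \<phi> x - deriv \<phi> (x - t)"] dg by blast
      have "\<bar>g h\<bar> = \<bar>h\<bar> * \<bar>deriv \<phi> x - deriv \<phi> (x - z)\<bar>" using z g0 by (simp add: abs_mult)
      also have "\<dots> \<le> \<bar>h\<bar> * (M * \<bar>h\<bar>)" using bnd[of z] z by (intro mult_left_mono) auto
      finally show ?thesis by (simp add: algebra_simps)
    qed
  qed
  then show ?thesis by (simp add: g_def power2_eq_square abs_mult_self algebra_simps)
qed

lemma esssup_bound:
  assumes "A \<in> sets borel"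
  shows "AE y in lborel. y \<in> A \<longrightarrow> ereal \<bar>\<psi> y\<bar> \<le> Linf_on \<psi> A"
proof -
  have "AE y in restrict_space lborel A. ereal \<bar>\<psi> y\<bar> \<le> Linf_on \<psi> A"
    unfolding Linf_on_def by (rule esssup_AE)
  then show ?thesis using assms by (subst (asm) AE_restrict_space_iff) auto
qed



lemma int_bound_ind:
  fixes f u :: "real \<Rightarrow> real"
  assumes "integrable lborel (\<lambda>h. indicator A h * f h)"
    and "(\<lambda>h. indicator C h * u h) \<in> borel_measurable borel"
    and "C \<subseteq> A" and "AE h in lborel. h \<in> C \<longrightarrow> \<bar>u h\<bar> \<le> f h"
  shows "integrable lborel (\<lambda>h. indicator C h * u h)"
proof (rule Bochner_Integration.integrable_bound[OF assms(1)])
  show "(\<lambda>h. indicator C h * u h) \<in> borel_measurable lborel" using assms(2) by simp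
  show "AE h in lborel. norm (indicator C h * u h) \<le> norm (indicator A h * f h)"
    using assms(4) proof eventually_elim
    case (elim h) then show ?case using assms(3) by (cases "h \<in> C") (auto simp: indicator_def)
  qed
qed

lemma main_x:
  fixes K :: "real \<Rightarrow> ennreal" and \<phi> \<psi> :: "real \<Rightarrow> real"
    and s lam Lam x R M B :: real
  assumes s: "0 < s" "s < 1"
    and K_meas[measurable]: "K \<in> borel_measurable borel"
    and K_sym: "AE x in lborel. K x = K (- x)"
    and lamLam: "0 < lam" "lam \<le> Lam"
    and K_bounds: "AE x in lborel. ennreal (lam * abs x powr (- (1 + 2 * s))) \<le> K x
                                   \<and> K x \<le> ennreal (Lam * abs x powr (- (1 + 2 * s)))"
    and d: "\<And>y. (\<phi> has_real_derivative deriv \<phi> y) (at y)"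
    and Bd: "\<And>y. \<bar>\<phi> y\<bar> \<le> B"
    and nn: "\<And>y. 0 \<le> \<phi> y"
    and psi: "weak_second_deriv \<phi> \<psi>"
    and R: "0 < R" "2 * R \<le> \<bar>x\<bar>"
    and Mb: "AE y in lborel. y \<in> {x - \<bar>x\<bar>/2<..<x + \<bar>x\<bar>/2} \<longrightarrow> \<bar>\<psi> y\<bar> \<le> M"
    and M0: "0 \<le> M"
  shows "LK K \<phi> x \<ge> lam * (\<bar>x\<bar> + R) powr (- (1 + 2 * s)) * integral {-R..R} \<phi>
            - \<phi> x * (Lam * (2 * ((\<bar>x\<bar>/2) powr (1 - (1 + 2 * s)) / ((1 + 2 * s) - 1))))
            - M * Lam * (2 * ((\<bar>x\<bar>/2) powr ((1 - 2 * s) + 1) / ((1 - 2 * s) + 1)))"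
proof -
  define a where "a = 1 + 2 * s"
  define r where "r = \<bar>x\<bar> / 2"
  define g where "g = (\<lambda>h. enn2real (K h))"
  have a1: "1 < a" using s by (simp add: a_def)
  have r0: "0 < r" using R by (simp add: r_def)
  have gm[measurable]: "g \<in> borel_measurable borel" unfolding g_def by measurable
  have pc: "continuous_on UNIV \<phi>"
    using d by (meson DERIV_continuous continuous_at_imp_continuous_on)
  have pm[measurable]: "\<phi> \<in> borel_measurable borel"
    by (rule borel_measurable_continuous_onI[OF pc])
  have g0: "0 \<le> g h" for h by (simp add: g_def)
  have gb: "AE h in lborel. lam * \<bar>h\<bar> powr (-a) \<le> g h \<and> g h \<le> Lam * \<bar>h\<bar> powr (-a)"
    using K_bounds
  proof eventually_elim
    case (elim h)
    have "0 \<le> lam * \<bar>h\<bar> powr (-a)" "0 \<le> Lam * \<bar>h\<bar> powr (-a)" using lamLam by auto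
    moreover have "K h < top" using elim by (metis ennreal_less_top order.strict_trans1)
    ultimately show ?case using elim unfolding g_def a_def
      by (metis enn2real_leI enn2real_mono enn2real_ennreal)
  qed
  have gs: "AE h in lborel. g (- h) = g h"
    using K_sym by eventually_elim (simp add: g_def)
  have lip: "\<And>u v. u \<in> {x - r<..<x + r} \<Longrightarrow> v \<in> {x - r<..<x + r} \<Longrightarrow>
               \<bar>deriv \<phi> v - deriv \<phi> u\<bar> \<le> M * \<bar>v - u\<bar>"
  proof -
    fix u v assume uv: "u \<in> {x - r<..<x + r}" "v \<in> {x - r<..<x + r}"
    have Mb': "AE y in lborel. y \<in> {x - r<..<x + r} \<longrightarrow> \<bar>\<psi> y\<bar> \<le> M"
      using Mb by (simp add: r_def)
    show "\<bar>deriv \<phi> v - deriv \<phi> u\<bar> \<le> M * \<bar>v - u\<bar>"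
    proof (cases "u \<le> v")
      case True then show ?thesis using lip_from_psi[OF psi Mb' M0, of u v] uv by auto
    next
      case False then show ?thesis using lip_from_psi[OF psi Mb' M0, of v u] uv
        by (auto simp: abs_minus_commute)
    qed
  qed
  have tay: "\<bar>\<phi> (x - h) - \<phi> x + deriv \<phi> x * h\<bar> \<le> M * h\<^sup>2" if "\<bar>h\<bar> < r" for h
    by (rule taylor1[OF d lip that M0])
  define G where "G = (\<lambda>h. (\<phi> (x - h) - \<phi> x) * g h)"
  define Q where "Q = (\<lambda>h. (\<phi> (x - h) - \<phi> x + deriv \<phi> x * h) * g h)"
  define Fe where "Fe = (\<lambda>\<epsilon>. LINT y:{y. \<epsilon> < \<bar>y - x\<bar>}|lborel. (\<phi> y - \<phi> x) * enn2real (K (x - y)))"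
  define Far where "Far = (\<integral>h. indicator {h. r \<le> \<bar>h\<bar>} h * G h \<partial>lborel)"
  define N where "N = (\<lambda>\<epsilon>. \<integral>h. indicator {h. \<epsilon> < \<bar>h\<bar> \<and> \<bar>h\<bar> < r} h * Q h \<partial>lborel)"
  define w where "w = (\<lambda>h. M * Lam * (indicator {-r..r} h * \<bar>h\<bar> powr (1 - 2 * s)))"
  have S1: "Fe \<epsilon> = (\<integral>h. indicator {h. \<epsilon> < \<bar>h\<bar>} h * G h \<partial>lborel)" for \<epsilon>
  proof -
    have "Fe \<epsilon> = \<bar>-1\<bar> *\<^sub>R (\<integral>h. (\<lambda>y. indicator {y. \<epsilon> < \<bar>y - x\<bar>} y *\<^sub>R ((\<phi> y - \<phi> x) * enn2real (K (x - y)))) (x + -1 * h) \<partial>lborel)"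
      unfolding Fe_def set_lebesgue_integral_def by (rule lborel_integral_real_affine) simp
    also have "\<dots> = (\<integral>h. indicator {h. \<epsilon> < \<bar>h\<bar>} h * G h \<partial>lborel)"
      by (simp add: G_def g_def indicator_def)
    finally show ?thesis .
  qed
  have Tint: "integrable lborel (\<lambda>h. indicator {h. e \<le> \<bar>h\<bar>} h * \<bar>h\<bar> powr - a)" if "0 < e" for e
    using pow_tail(1)[OF that a1] .
  have TintC: "integrable lborel (\<lambda>h. indicator {h. e \<le> \<bar>h\<bar>} h * (C * \<bar>h\<bar> powr - a))" if "0 < e" for e C
    using integrable_mult_right[OF Tint[OF that], of C] by (simp add: algebra_simps)
  have Bn: "0 \<le> B" using Bd[of 0] by linarith
  have tail_G: "integrable lborel (\<lambda>h. indicator {h. r \<le> \<bar>h\<bar>} h * G h)"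
  proof (rule int_bound_ind[OF TintC[OF r0, of "2 * B * Lam"]])
    show "(\<lambda>h. indicator {h. r \<le> \<bar>h\<bar>} h * G h) \<in> borel_measurable borel"
      unfolding G_def by measurable
    show "AE h in lborel. h \<in> {h. r \<le> \<bar>h\<bar>} \<longrightarrow> \<bar>G h\<bar> \<le> 2 * B * Lam * \<bar>h\<bar> powr - a"
      using gb proof eventually_elim
      case (elim h)
      have "\<bar>G h\<bar> = \<bar>\<phi> (x - h) - \<phi> x\<bar> * g h" using g0 by (simp add: G_def abs_mult)
      also have "\<dots> \<le> (2 * B) * (Lam * \<bar>h\<bar> powr - a)"
        using elim g0[of h] Bd[of "x - h"] Bd[of x] by (intro mult_mono) auto
      finally show ?case by (simp add: algebra_simps)
    qed
  qed auto
  have tail_g: "integrable lborel (\<lambda>h. indicator {h. r \<le> \<bar>h\<bar>} h * g h)"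
  proof (rule int_bound_ind[OF TintC[OF r0, of "Lam"]])
    show "AE h in lborel. h \<in> {h. r \<le> \<bar>h\<bar>} \<longrightarrow> \<bar>g h\<bar> \<le> Lam * \<bar>h\<bar> powr - a"
      using gb by eventually_elim (auto simp: g0)
  qed auto
  have tail_pg: "integrable lborel (\<lambda>h. indicator {h. r \<le> \<bar>h\<bar>} h * (\<phi> (x - h) * g h))"
  proof (rule int_bound_ind[OF TintC[OF r0, of "B * Lam"]])
    show "AE h in lborel. h \<in> {h. r \<le> \<bar>h\<bar>} \<longrightarrow> \<bar>\<phi> (x - h) * g h\<bar> \<le> B * Lam * \<bar>h\<bar> powr - a"
      using gb proof eventually_elim
      case (elim h)
      have "\<bar>\<phi> (x - h) * g h\<bar> = \<bar>\<phi> (x - h)\<bar> * g h" using g0 by (simp add: abs_mult)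
      also have "\<dots> \<le> B * (Lam * \<bar>h\<bar> powr - a)"
        using elim g0[of h] Bd[of "x - h"] by (intro mult_mono) auto
      finally show ?case by (simp add: algebra_simps)
    qed
  qed auto
  have near_G: "integrable lborel (\<lambda>h. indicator {h. e < \<bar>h\<bar> \<and> \<bar>h\<bar> < r} h * G h)" if "0 < e" for e
  proof (rule int_bound_ind[OF TintC[OF that, of "2 * B * Lam"]])
    show "AE h in lborel. h \<in> {h. e < \<bar>h\<bar> \<and> \<bar>h\<bar> < r} \<longrightarrow> \<bar>G h\<bar> \<le> 2 * B * Lam * \<bar>h\<bar> powr - a"
      using gb proof eventually_elim
      case (elim h)
      have "\<bar>G h\<bar> = \<bar>\<phi> (x - h) - \<phi> x\<bar> * g h" using g0 by (simp add: G_def abs_mult)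
      also have "\<dots> \<le> (2 * B) * (Lam * \<bar>h\<bar> powr - a)"
        using elim g0[of h] Bd[of "x - h"] Bd[of x] by (intro mult_mono) auto
      finally show ?case by (simp add: algebra_simps)
    qed
  qed (auto simp: G_def)
  have near_odd: "integrable lborel (\<lambda>h. indicator {h. e < \<bar>h\<bar> \<and> \<bar>h\<bar> < r} h * (h * g h))" if "0 < e" for e
  proof (rule int_bound_ind[OF TintC[OF that, of "r * Lam"]])
    show "AE h in lborel. h \<in> {h. e < \<bar>h\<bar> \<and> \<bar>h\<bar> < r} \<longrightarrow> \<bar>h * g h\<bar> \<le> r * Lam * \<bar>h\<bar> powr - a"
      using gb proof eventually_elim
      case (elim h)
      show ?case
      proof
        assume hr: "h \<in> {h. e < \<bar>h\<bar> \<and> \<bar>h\<bar> < r}"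
        have "\<bar>h * g h\<bar> = \<bar>h\<bar> * g h" using g0 by (simp add: abs_mult)
        also have "\<dots> \<le> r * (Lam * \<bar>h\<bar> powr - a)"
          using elim g0[of h] hr by (intro mult_mono) auto
        finally show "\<bar>h * g h\<bar> \<le> r * Lam * \<bar>h\<bar> powr - a" by (simp add: algebra_simps)
      qed
    qed
  qed auto
  have odd0: "(\<integral>h. indicator {h. e < \<bar>h\<bar> \<and> \<bar>h\<bar> < r} h * (h * g h) \<partial>lborel) = 0" for e
  proof -
    let ?f = "\<lambda>h. indicator {h. e < \<bar>h\<bar> \<and> \<bar>h\<bar> < r} h * (h * g h)"
    have "integral\<^sup>L lborel ?f = \<bar>-1\<bar> *\<^sub>R (\<integral>h. ?f (0 + -1 * h) \<partial>lborel)"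
      by (rule lborel_integral_real_affine) simp
    also have "\<dots> = (\<integral>h. - ?f h \<partial>lborel)"
      apply simp
      apply (rule integral_cong_AE)
        apply measurable
      using gs by eventually_elim (auto simp: indicator_def)
    also have "\<dots> = - integral\<^sup>L lborel ?f" by simp
    finally show ?thesis by simp
  qed
  have w_int: "integrable lborel w"
    unfolding w_def using pow_near(1)[of r "1 - 2 * s"] r0 s by simp
  have w0: "0 \<le> w h" for h using M0 lamLam by (simp add: w_def)
  have w_val: "integral\<^sup>L lborel w = M * Lam * (2 * (r powr ((1 - 2 * s) + 1) / ((1 - 2 * s) + 1)))"
    unfolding w_def using pow_near(2)[of r "1 - 2 * s"] r0 s by simp
  have Qb: "AE h in lborel. \<forall>e. norm (indicator {h. e < \<bar>h\<bar> \<and> \<bar>h\<bar> < r} h * Q h) \<le> w h"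
    using gb proof eventually_elim
    case (elim h)
    show ?case
    proof
      fix e
      show "norm (indicator {h. e < \<bar>h\<bar> \<and> \<bar>h\<bar> < r} h * Q h) \<le> w h"
      proof (cases "h \<in> {h. e < \<bar>h\<bar> \<and> \<bar>h\<bar> < r} \<and> h \<noteq> 0")
        case True
        then have hr: "\<bar>h\<bar> < r" "h \<noteq> 0" by auto
        have "\<bar>Q h\<bar> = \<bar>\<phi> (x - h) - \<phi> x + deriv \<phi> x * h\<bar> * g h" using g0 by (simp add: Q_def abs_mult)
        also have "\<dots> \<le> (M * h\<^sup>2) * (Lam * \<bar>h\<bar> powr - a)"
          using elim g0[of h] tay[OF hr(1)] M0 by (intro mult_mono) auto
        also have "\<dots> = M * Lam * (\<bar>h\<bar> powr 2 * \<bar>h\<bar> powr - a)"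
          using hr by (simp add: powr_numeral)
        also have "\<dots> = M * Lam * \<bar>h\<bar> powr (1 - 2 * s)"
        proof -
          have e1: "2 + - a = 1 - 2 * s" by (simp add: a_def)
          have "\<bar>h\<bar> powr 2 * \<bar>h\<bar> powr - a = \<bar>h\<bar> powr (1 - 2 * s)"
            by (simp only: powr_add[symmetric] e1)
          then show ?thesis by simp
        qed
        finally have "\<bar>Q h\<bar> \<le> M * Lam * \<bar>h\<bar> powr (1 - 2 * s)" .
        moreover have "h \<in> {-r..r}" using hr by auto
        ultimately show ?thesis using True by (simp add: w_def indicator_def)
      next
        case False
        then show ?thesis using w0[of h] by (auto simp: indicator_def Q_def)
      qed
    qed
  qed
  have near_Q: "integrable lborel (\<lambda>h. indicator {h. e < \<bar>h\<bar> \<and> \<bar>h\<bar> < r} h * Q h)" for e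
  proof (rule Bochner_Integration.integrable_bound[OF w_int])
    show "(\<lambda>h. indicator {h. e < \<bar>h\<bar> \<and> \<bar>h\<bar> < r} h * Q h) \<in> borel_measurable lborel"
      unfolding Q_def by measurable
    show "AE h in lborel. norm (indicator {h. e < \<bar>h\<bar> \<and> \<bar>h\<bar> < r} h * Q h) \<le> norm (w h)"
      using Qb by eventually_elim (use w0 in auto)
  qed
  have S2: "Fe e = Far + N e" if e: "0 < e" "e < r" for e
  proof -
    have pw: "(\<lambda>h. indicator {h. e < \<bar>h\<bar>} h * G h) = (\<lambda>h. indicator {h. r \<le> \<bar>h\<bar>} h * G h +
       (indicator {h. e < \<bar>h\<bar> \<and> \<bar>h\<bar> < r} h * Q h - deriv \<phi> x * (indicator {h. e < \<bar>h\<bar> \<and> \<bar>h\<bar> < r} h * (h * g h))))"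
      using e by (auto simp: fun_eq_iff indicator_def G_def Q_def algebra_simps)
    have "Fe e = Far + (N e - deriv \<phi> x * 0)"
      unfolding S1 pw Far_def N_def
      using tail_G near_Q near_odd[OF e(1)] odd0[of e]
      by (simp add: Bochner_Integration.integral_add Bochner_Integration.integral_diff)
    then show ?thesis by simp
  qed
  define N0 where "N0 = N 0"
  have S3: "(N \<longlongrightarrow> N0) (at_right 0)"
  proof -
    have "((\<lambda>t. N (inverse t)) \<longlongrightarrow> N0) at_top"
      unfolding N_def N0_def
    proof (rule integral_dominated_convergence_at_top[OF _ _ w_int])
      show "(\<lambda>h. indicator {h. 0 < \<bar>h\<bar> \<and> \<bar>h\<bar> < r} h * Q h) \<in> borel_measurable lborel"
        unfolding Q_def by measurable
      show "(\<lambda>h. indicator {h. inverse t < \<bar>h\<bar> \<and> \<bar>h\<bar> < r} h * Q h) \<in> borel_measurable lborel" for t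
        unfolding Q_def by measurable
      show "\<forall>\<^sub>F t in at_top. AE h in lborel. norm (indicator {h. inverse t < \<bar>h\<bar> \<and> \<bar>h\<bar> < r} h * Q h) \<le> w h"
      proof (rule always_eventually, rule allI)
        fix t
        show "AE h in lborel. norm (indicator {h. inverse t < \<bar>h\<bar> \<and> \<bar>h\<bar> < r} h * Q h) \<le> w h"
          using Qb by eventually_elim blast
      qed
      show "AE h in lborel. ((\<lambda>t. indicator {h. inverse t < \<bar>h\<bar> \<and> \<bar>h\<bar> < r} h * Q h)
              \<longlongrightarrow> indicator {h. 0 < \<bar>h\<bar> \<and> \<bar>h\<bar> < r} h * Q h) at_top"
      proof (intro AE_I2)
        fix h :: real
        show "((\<lambda>t. indicator {h. inverse t < \<bar>h\<bar> \<and> \<bar>h\<bar> < r} h * Q h)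
              \<longlongrightarrow> indicator {h. 0 < \<bar>h\<bar> \<and> \<bar>h\<bar> < r} h * Q h) at_top"
        proof (cases "h = 0")
          case True then show ?thesis by (simp add: Q_def)
        next
          case False
          have "\<forall>\<^sub>F t in at_top. inverse t < \<bar>h\<bar>"
          proof -
            have "\<forall>\<^sub>F t in at_top. 2 / \<bar>h\<bar> < t" by (rule eventually_gt_at_top)
            then show ?thesis
            proof eventually_elim
              case (elim t)
              then have "0 < t" using False by (smt (verit) divide_pos_pos zero_less_abs_iff)
              then show ?case using elim False by (simp add: field_simps)
            qed
          qed
          then have "\<forall>\<^sub>F t in at_top. indicator {h. inverse t < \<bar>h\<bar> \<and> \<bar>h\<bar> < r} h * Q h
                = indicator {h. 0 < \<bar>h\<bar> \<and> \<bar>h\<bar> < r} h * Q h"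
            by eventually_elim (use False in \<open>auto simp: indicator_def\<close>)
          then show ?thesis by (rule tendsto_eventually)
        qed
      qed
    qed
    then show ?thesis by (simp add: filterlim_at_right_to_top)
  qed
  have S4: "LK K \<phi> x = Far + N0"
  proof -
    have "(Fe \<longlongrightarrow> Far + N0) (at_right 0)"
    proof (rule Lim_transform_eventually)
      show "((\<lambda>e. Far + N e) \<longlongrightarrow> Far + N0) (at_right 0)"
        by (intro tendsto_add tendsto_const S3)
      show "\<forall>\<^sub>F e in at_right 0. Far + N e = Fe e"
        using eventually_at_right_real[OF r0] by eventually_elim (simp add: S2)
    qed
    then show ?thesis unfolding LK_def Fe_def[symmetric]
      by (intro tendsto_Lim) auto
  qed
  have S5: "\<bar>N0\<bar> \<le> M * Lam * (2 * (r powr ((1 - 2 * s) + 1) / ((1 - 2 * s) + 1)))"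
  proof -
    let ?f = "\<lambda>h. indicator {h. 0 < \<bar>h\<bar> \<and> \<bar>h\<bar> < r} h * Q h"
    have "\<bar>N0\<bar> = norm (integral\<^sup>L lborel ?f)" by (simp add: N0_def N_def)
    also have "\<dots> \<le> (\<integral>h. norm (?f h) \<partial>lborel)" by (rule integral_norm_bound)
    also have "\<dots> \<le> integral\<^sup>L lborel w"
      apply (rule integral_mono_AE)
      using near_Q[of 0] w_int apply (simp_all only: integrable_norm)
      using Qb by eventually_elim blast
    finally show ?thesis using w_val by simp
  qed
  have IR: "(\<integral>h. indicator {-R..R} (x - h) * \<phi> (x - h) \<partial>lborel) = integral {-R..R} \<phi>"
    "integrable lborel (\<lambda>h. indicator {-R..R} (x - h) * \<phi> (x - h))"
  proof -
    have ci: "integrable lborel (\<lambda>y. indicator {-R..R} y *\<^sub>R \<phi> y)"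
      by (rule borel_integrable_compact) (auto intro: continuous_on_subset[OF pc])
    then have "set_integrable lborel {-R..R} \<phi>" by (simp add: set_integrable_def)
    from set_borel_integral_eq_integral(2)[OF this]
    have v: "(\<integral>y. indicator {-R..R} y * \<phi> y \<partial>lborel) = integral {-R..R} \<phi>"
      by (simp add: set_lebesgue_integral_def)
    have "(\<integral>y. indicator {-R..R} y * \<phi> y \<partial>lborel) =
       \<bar>-1\<bar> *\<^sub>R (\<integral>h. (\<lambda>y. indicator {-R..R} y * \<phi> y) (x + -1 * h) \<partial>lborel)"
      by (rule lborel_integral_real_affine) simp
    then show "(\<integral>h. indicator {-R..R} (x - h) * \<phi> (x - h) \<partial>lborel) = integral {-R..R} \<phi>"
      using v by simp
    show "integrable lborel (\<lambda>h. indicator {-R..R} (x - h) * \<phi> (x - h))"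
      using lborel_integrable_real_affine[OF ci, of "-1" x] by simp
  qed
  have S6a: "(\<integral>h. indicator {h. r \<le> \<bar>h\<bar>} h * g h \<partial>lborel) \<le> Lam * (2 * (r powr (1 - a) / (a - 1)))"
  proof -
    have "(\<integral>h. indicator {h. r \<le> \<bar>h\<bar>} h * g h \<partial>lborel)
        \<le> (\<integral>h. Lam * (indicator {h. r \<le> \<bar>h\<bar>} h * \<bar>h\<bar> powr - a) \<partial>lborel)"
      apply (rule integral_mono_AE[OF tail_g])
      using Tint[OF r0] apply simp
      using gb by eventually_elim (auto simp: indicator_def)
    also have "\<dots> = Lam * (2 * (r powr (1 - a) / (a - 1)))"
      using pow_tail(2)[OF r0 a1] by simp
    finally show ?thesis .
  qed
  have S6b: "lam * (\<bar>x\<bar> + R) powr (- a) * integral {-R..R} \<phi> \<le>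
             (\<integral>h. indicator {h. r \<le> \<bar>h\<bar>} h * (\<phi> (x - h) * g h) \<partial>lborel)"
  proof -
    have "lam * (\<bar>x\<bar> + R) powr (- a) * integral {-R..R} \<phi> =
       (\<integral>h. lam * (\<bar>x\<bar> + R) powr (- a) * (indicator {-R..R} (x - h) * \<phi> (x - h)) \<partial>lborel)"
      using IR(1) by simp
    also have "\<dots> \<le> (\<integral>h. indicator {h. r \<le> \<bar>h\<bar>} h * (\<phi> (x - h) * g h) \<partial>lborel)"
    proof (rule integral_mono_AE[OF _ tail_pg])
      show "integrable lborel (\<lambda>h. lam * (\<bar>x\<bar> + R) powr (- a) * (indicator {-R..R} (x - h) * \<phi> (x - h)))"
        using IR(2) by simp
      show "AE h in lborel. lam * (\<bar>x\<bar> + R) powr (- a) * (indicator {-R..R} (x - h) * \<phi> (x - h))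
              \<le> indicator {h. r \<le> \<bar>h\<bar>} h * (\<phi> (x - h) * g h)"
        using gb proof eventually_elim
        case (elim h)
        show ?case
        proof (cases "x - h \<in> {-R..R}")
          case True
          have hr: "r \<le> \<bar>h\<bar>" "\<bar>h\<bar> \<le> \<bar>x\<bar> + R" using True R by (auto simp: r_def)
          have "lam * (\<bar>x\<bar> + R) powr (- a) \<le> lam * \<bar>h\<bar> powr (- a)"
            using hr r0 a1 lamLam by (intro mult_left_mono powr_mono2') auto
          also have "\<dots> \<le> g h" using elim by simp
          finally have "lam * (\<bar>x\<bar> + R) powr (- a) * \<phi> (x - h) \<le> g h * \<phi> (x - h)"
            using nn[of "x - h"] by (intro mult_right_mono) auto
          then show ?thesis using True hr by (simp add: indicator_def algebra_simps)
        next
          case False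
          then have "indicator {-R..R} (x - h) = (0::real)" by simp
          moreover have "0 \<le> indicator {h. r \<le> \<bar>h\<bar>} h * (\<phi> (x - h) * g h)"
            using nn[of "x - h"] g0[of h] by simp
          ultimately show ?thesis by simp
        qed
      qed
    qed
    finally show ?thesis .
  qed
  have S6: "Far = (\<integral>h. indicator {h. r \<le> \<bar>h\<bar>} h * (\<phi> (x - h) * g h) \<partial>lborel)
               - \<phi> x * (\<integral>h. indicator {h. r \<le> \<bar>h\<bar>} h * g h \<partial>lborel)"
  proof -
    have "(\<lambda>h. indicator {h. r \<le> \<bar>h\<bar>} h * G h) = (\<lambda>h. indicator {h. r \<le> \<bar>h\<bar>} h * (\<phi> (x - h) * g h)
        - \<phi> x * (indicator {h. r \<le> \<bar>h\<bar>} h * g h))"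
      by (auto simp: fun_eq_iff G_def algebra_simps)
    then show ?thesis unfolding Far_def using tail_pg tail_g by simp
  qed
  have "LK K \<phi> x \<ge> lam * (\<bar>x\<bar> + R) powr (- a) * integral {-R..R} \<phi>
          - \<phi> x * (Lam * (2 * (r powr (1 - a) / (a - 1))))
          - M * Lam * (2 * (r powr ((1 - 2 * s) + 1) / ((1 - 2 * s) + 1)))"
  proof -
    have "\<phi> x * (\<integral>h. indicator {h. r \<le> \<bar>h\<bar>} h * g h \<partial>lborel) \<le> \<phi> x * (Lam * (2 * (r powr (1 - a) / (a - 1))))"
      using S6a nn[of x] by (rule mult_left_mono)
    then show ?thesis using S4 S5 S6 S6b by linarith
  qed
  then show ?thesis by (simp add: a_def r_def)
qed



lemma ereal_fin_aux:
  fixes L :: ereal and c :: real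
  assumes "c \<noteq> 0" "-1 < ereal c * L" "ereal c * L < 1"
  shows "L = ereal (real_of_ereal L)"
  using assms by (cases L) (auto split: if_splits)

lemma Mlim_top:
  fixes L :: "real \<Rightarrow> ereal"
  assumes top: "((\<lambda>x. ereal (x ^ 3) * L x) \<longlongrightarrow> 0) at_top"
  shows "((\<lambda>x. \<bar>x\<bar> ^ 3 * max 0 (real_of_ereal (L x))) \<longlongrightarrow> 0) at_top"
    "\<forall>\<^sub>F x in at_top. L x = ereal (real_of_ereal (L x))"
proof -
  have ev: "\<forall>\<^sub>F x in at_top. ereal (x ^ 3) * L x \<in> {-1<..<1}"
    using top by (rule topological_tendstoD) auto
  have ev2: "\<forall>\<^sub>F x in at_top. 0 < x \<and> L x = ereal (real_of_ereal (L x))"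
    using ev eventually_gt_at_top[of 0]
  proof eventually_elim
    case (elim x) then show ?case by (intro conjI ereal_fin_aux[of "x ^ 3"]) auto
  qed
  then show "\<forall>\<^sub>F x in at_top. L x = ereal (real_of_ereal (L x))" by eventually_elim auto
  have "((\<lambda>x. ereal (x ^ 3 * real_of_ereal (L x))) \<longlongrightarrow> ereal 0) at_top"
  proof (rule Lim_transform_eventually[OF top[unfolded zero_ereal_def]])
    show "\<forall>\<^sub>F x in at_top. ereal (x ^ 3) * L x = ereal (x ^ 3 * real_of_ereal (L x))"
      using ev2 by eventually_elim (metis times_ereal.simps(1))
  qed
  then have "((\<lambda>x. x ^ 3 * real_of_ereal (L x)) \<longlongrightarrow> 0) at_top" by (simp only: lim_ereal)
  then have "((\<lambda>x. max 0 (x ^ 3 * real_of_ereal (L x))) \<longlongrightarrow> max 0 0) at_top"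
    by (intro tendsto_max tendsto_const)
  then have l: "((\<lambda>x. max 0 (x ^ 3 * real_of_ereal (L x))) \<longlongrightarrow> 0) at_top" by simp
  moreover have "\<forall>\<^sub>F x in at_top. max 0 (x ^ 3 * real_of_ereal (L x)) = \<bar>x\<bar> ^ 3 * max 0 (real_of_ereal (L x))"
      using eventually_gt_at_top[of 0] by eventually_elim (simp add: max_def zero_le_mult_iff)
  ultimately show "((\<lambda>x. \<bar>x\<bar> ^ 3 * max 0 (real_of_ereal (L x))) \<longlongrightarrow> 0) at_top"
    by (rule Lim_transform_eventually)
qed

lemma Mlim_bot:
  fixes L :: "real \<Rightarrow> ereal"
  assumes bot: "((\<lambda>x. ereal (x ^ 3) * L x) \<longlongrightarrow> 0) at_bot"
  shows "((\<lambda>x. \<bar>x\<bar> ^ 3 * max 0 (real_of_ereal (L x))) \<longlongrightarrow> 0) at_bot"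
    "\<forall>\<^sub>F x in at_bot. L x = ereal (real_of_ereal (L x))"
proof -
  have ev: "\<forall>\<^sub>F x in at_bot. ereal (x ^ 3) * L x \<in> {-1<..<1}"
    using bot by (rule topological_tendstoD) auto
  have ev2: "\<forall>\<^sub>F x in at_bot. x < 0 \<and> L x = ereal (real_of_ereal (L x))"
    using ev eventually_gt_at_bot[of 0]
  proof eventually_elim
    case (elim x) then show ?case by (intro conjI ereal_fin_aux[of "x ^ 3"]) auto
  qed
  then show "\<forall>\<^sub>F x in at_bot. L x = ereal (real_of_ereal (L x))" by eventually_elim auto
  have "((\<lambda>x. ereal (x ^ 3 * real_of_ereal (L x))) \<longlongrightarrow> ereal 0) at_bot"
  proof (rule Lim_transform_eventually[OF bot[unfolded zero_ereal_def]])
    show "\<forall>\<^sub>F x in at_bot. ereal (x ^ 3) * L x = ereal (x ^ 3 * real_of_ereal (L x))"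
      using ev2 by eventually_elim (metis times_ereal.simps(1))
  qed
  then have "((\<lambda>x. x ^ 3 * real_of_ereal (L x)) \<longlongrightarrow> 0) at_bot" by (simp only: lim_ereal)
  then have "((\<lambda>x. max 0 (- (x ^ 3 * real_of_ereal (L x)))) \<longlongrightarrow> max 0 (- 0)) at_bot"
    by (intro tendsto_max tendsto_const tendsto_minus)
  then have l: "((\<lambda>x. max 0 (- (x ^ 3 * real_of_ereal (L x)))) \<longlongrightarrow> 0) at_bot" by simp
  moreover have "\<forall>\<^sub>F x in at_bot. max 0 (- (x ^ 3 * real_of_ereal (L x))) = \<bar>x\<bar> ^ 3 * max 0 (real_of_ereal (L x))"
      using eventually_gt_at_bot[of 0]
    proof eventually_elim
      case (elim x)
      then have "\<bar>x\<bar> ^ 3 = - (x ^ 3)" by (simp add: abs_if power_minus_odd)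
      then show ?case using elim by (simp add: max_def mult_le_0_iff)
    qed
  ultimately show "((\<lambda>x. \<bar>x\<bar> ^ 3 * max 0 (real_of_ereal (L x))) \<longlongrightarrow> 0) at_bot"
    by (rule Lim_transform_eventually)
qed



lemma IR_lower:
  fixes \<phi> :: "real \<Rightarrow> real" and \<kappa> R Cbar \<sigma> \<tau> :: real
  assumes pc: "\<And>y. isCont \<phi> y" and k: "0 < \<kappa>" "\<kappa> \<le> R" and st: "1 < \<sigma>" "1 < \<tau>"
    and phi_left: "\<And>x. x < - \<kappa> \<Longrightarrow> \<phi> x \<ge> Cbar * abs x powr (- \<sigma>)"
    and phi_right: "\<And>x. x > \<kappa> \<Longrightarrow> \<phi> x \<ge> Cbar * abs x powr (- \<tau>)"
  shows "Cbar * ((\<kappa> powr (1 - \<sigma>) - R powr (1 - \<sigma>)) / (\<sigma> - 1)) + integral {-\<kappa>..\<kappa>} \<phi>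
          + Cbar * ((\<kappa> powr (1 - \<tau>) - R powr (1 - \<tau>)) / (\<tau> - 1)) \<le> integral {-R..R} \<phi>"
proof -
  have pco: "continuous_on S \<phi>" for S using pc by (simp add: continuous_at_imp_continuous_on)
  have int: "\<phi> integrable_on {a..b}" for a b by (rule integrable_continuous_interval[OF pco])
  have bR: "Cbar * \<kappa> powr (- \<tau>) \<le> \<phi> \<kappa>"
  proof -
    have "isCont (\<lambda>y. \<phi> y - Cbar * y powr (- \<tau>)) \<kappa>"
      using k by (intro continuous_intros pc) auto
    then have "((\<lambda>y. \<phi> y - Cbar * y powr (- \<tau>)) \<longlongrightarrow> \<phi> \<kappa> - Cbar * \<kappa> powr (- \<tau>)) (at_right \<kappa>)"
      by (simp add: isCont_def filterlim_at_split)
    moreover have "\<forall>\<^sub>F y in at_right \<kappa>. 0 \<le> \<phi> y - Cbar * y powr (- \<tau>)"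
      using eventually_at_right_less[of \<kappa>] proof eventually_elim
      case (elim y) then show ?case using phi_right[of y] k by simp
    qed
    ultimately have "0 \<le> \<phi> \<kappa> - Cbar * \<kappa> powr (- \<tau>)"
      by (rule tendsto_lowerbound) simp
    then show ?thesis by simp
  qed
  have bL: "Cbar * \<kappa> powr (- \<sigma>) \<le> \<phi> (- \<kappa>)"
  proof -
    have "isCont (\<lambda>y. \<phi> y - Cbar * (- y) powr (- \<sigma>)) (- \<kappa>)"
      using k by (intro continuous_intros pc) auto
    then have "((\<lambda>y. \<phi> y - Cbar * (- y) powr (- \<sigma>)) \<longlongrightarrow> \<phi> (- \<kappa>) - Cbar * \<kappa> powr (- \<sigma>)) (at_left (- \<kappa>))"
      by (simp add: isCont_def filterlim_at_split)
    moreover have "\<forall>\<^sub>F y in at_left (- \<kappa>). 0 \<le> \<phi> y - Cbar * (- y) powr (- \<sigma>)"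
    proof -
      have "\<forall>\<^sub>F y in at_left (- \<kappa>). y \<in> {- \<kappa> - 1<..<- \<kappa>}"
        by (rule eventually_at_left_real) simp
      then show ?thesis proof eventually_elim
      case (elim y) then show ?case using phi_left[of y] k by simp
    qed
    qed
    ultimately have "0 \<le> \<phi> (- \<kappa>) - Cbar * \<kappa> powr (- \<sigma>)"
      by (rule tendsto_lowerbound) simp
    then show ?thesis by simp
  qed
  have right: "Cbar * ((\<kappa> powr (1 - \<tau>) - R powr (1 - \<tau>)) / (\<tau> - 1)) \<le> integral {\<kappa>..R} \<phi>"
  proof (rule has_integral_le[OF _ integrable_integral[OF int]])
    show "((\<lambda>y. Cbar * y powr (- \<tau>)) has_integral Cbar * ((\<kappa> powr (1 - \<tau>) - R powr (1 - \<tau>)) / (\<tau> - 1))) {\<kappa>..R}"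
      by (rule has_integral_mult_right[OF pow_seg[OF k st(2)]])
    show "Cbar * y powr (- \<tau>) \<le> \<phi> y" if "y \<in> {\<kappa>..R}" for y
    proof (cases "y = \<kappa>")
      case True then show ?thesis using bR by simp
    next
      case False then show ?thesis using that phi_right[of y] k by auto
    qed
  qed
  have left: "Cbar * ((\<kappa> powr (1 - \<sigma>) - R powr (1 - \<sigma>)) / (\<sigma> - 1)) \<le> integral {-R..-\<kappa>} \<phi>"
  proof (rule has_integral_le[OF _ integrable_integral[OF int]])
    have "((\<lambda>y. Cbar * y powr (- \<sigma>)) has_integral Cbar * ((\<kappa> powr (1 - \<sigma>) - R powr (1 - \<sigma>)) / (\<sigma> - 1))) {\<kappa>..R}"
      by (rule has_integral_mult_right[OF pow_seg[OF k st(1)]])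
    then show "((\<lambda>y. Cbar * (- y) powr (- \<sigma>)) has_integral Cbar * ((\<kappa> powr (1 - \<sigma>) - R powr (1 - \<sigma>)) / (\<sigma> - 1))) {-R..-\<kappa>}"
      by (subst has_integral_reflect_real[of "\<lambda>y. Cbar * y powr (- \<sigma>)", simplified])
    show "Cbar * (- y) powr (- \<sigma>) \<le> \<phi> y" if "y \<in> {-R..-\<kappa>}" for y
    proof (cases "y = - \<kappa>")
      case True then show ?thesis using bL by simp
    next
      case False then show ?thesis using that phi_left[of y] k by auto
    qed
  qed
  have c1: "integral {-R..-\<kappa>} \<phi> + integral {-\<kappa>..R} \<phi> = integral {-R..R} \<phi>"
    using k by (intro Henstock_Kurzweil_Integration.integral_combine int) auto
  have c2: "integral {-\<kappa>..\<kappa>} \<phi> + integral {\<kappa>..R} \<phi> = integral {-\<kappa>..R} \<phi>"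
    using k by (intro Henstock_Kurzweil_Integration.integral_combine int) auto
  show ?thesis using left right c1 c2 by linarith
qed



theorem proposition3p3:
  fixes s lam Lam Cbar \<kappa> \<sigma> \<tau> \<gamma> :: real
    and K :: "real \<Rightarrow> ennreal" and \<phi> \<psi> :: "real \<Rightarrow> real"
  assumes s: "0 < s" "s < 1"
    and K_meas: "K \<in> borel_measurable borel"
    and K_sym: "AE x in lborel. K x = K (- x)"
    and lamLam: "0 < lam" "lam \<le> Lam"
    and K_bounds: "AE x in lborel. ennreal (lam * abs x powr (- (1 + 2 * s))) \<le> K x
                                   \<and> K x \<le> ennreal (Lam * abs x powr (- (1 + 2 * s)))"
    and params: "0 < Cbar" "0 < \<kappa>" "1 < \<sigma>" "1 < \<tau>" "0 < \<gamma>"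
    and phi_C11: "C11 \<phi>"
    and phi_left: "\<And>x. x < - \<kappa> \<Longrightarrow> \<phi> x \<ge> Cbar * abs x powr (- \<sigma>)"
    and phi_right: "\<And>x. x > \<kappa> \<Longrightarrow> \<phi> x \<ge> Cbar * abs x powr (- \<tau>)"
    and phi_mid: "\<And>x. x \<in> {-\<kappa>..\<kappa>} \<Longrightarrow> \<phi> x \<ge> \<gamma>"
    and phi_decay_top: "((\<lambda>x. \<bar>x\<bar> * \<phi> x) \<longlongrightarrow> 0) at_top"
    and phi_decay_bot: "((\<lambda>x. \<bar>x\<bar> * \<phi> x) \<longlongrightarrow> 0) at_bot"
    and psi: "weak_second_deriv \<phi> \<psi>"
    and psi_top: "((\<lambda>x. ereal (x ^ 3) * Linf_on \<psi> {x/2<..<3*x/2}) \<longlongrightarrow> 0) at_top"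
    and psi_bot: "((\<lambda>x. ereal (x ^ 3) * Linf_on \<psi> {3*x/2<..<x/2}) \<longlongrightarrow> 0) at_bot"
  shows "Liminf at_infinity (\<lambda>x. ereal (abs x powr (1 + 2 * s) * LK K \<phi> x))
           \<ge> ereal (lam * (Cbar * \<kappa> powr (1 - \<sigma>) / (\<sigma> - 1) + integral {-\<kappa>..\<kappa>} \<phi>
                          + Cbar * \<kappa> powr (1 - \<tau>) / (\<tau> - 1)))"
proof -
  obtain B where Bd: "\<And>y. \<bar>\<phi> y\<bar> \<le> B"
    using phi_C11 unfolding C11_def bounded_iff by auto
  have d: "\<And>y. (\<phi> has_real_derivative deriv \<phi> y) (at y)"
    using phi_C11 unfolding C11_def by (simp add: DERIV_deriv_iff_real_differentiable)
  have pc: "\<And>y. isCont \<phi> y" using d by (rule DERIV_isCont)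
  have nn: "0 \<le> \<phi> y" for y
  proof -
    consider "y < - \<kappa>" | "y > \<kappa>" | "y \<in> {-\<kappa>..\<kappa>}" by force
    then show ?thesis
    proof cases
      case 1 then show ?thesis using phi_left[of y] params by (smt (verit) mult_nonneg_nonneg powr_ge_zero)
    next
      case 2 then show ?thesis using phi_right[of y] params by (smt (verit) mult_nonneg_nonneg powr_ge_zero)
    next
      case 3 then show ?thesis using phi_mid[of y] params by simp
    qed
  qed
  define a where "a = 1 + 2 * s"
  define L where "L = (\<lambda>x. Linf_on \<psi> {x - \<bar>x\<bar>/2<..<x + \<bar>x\<bar>/2})"
  define M where "M = (\<lambda>x. max 0 (real_of_ereal (L x)))"
  have Ltop: "((\<lambda>x. ereal (x ^ 3) * L x) \<longlongrightarrow> 0) at_top"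
  proof (rule Lim_transform_eventually[OF psi_top])
    show "\<forall>\<^sub>F x in at_top. ereal (x ^ 3) * Linf_on \<psi> {x / 2<..<3 * x / 2} = ereal (x ^ 3) * L x"
      using eventually_gt_at_top[of 0]
    proof eventually_elim
      case (elim x)
      then have "x - \<bar>x\<bar>/2 = x/2" "x + \<bar>x\<bar>/2 = 3*x/2" by auto
      then show ?case by (simp add: L_def)
    qed
  qed
  have Lbot: "((\<lambda>x. ereal (x ^ 3) * L x) \<longlongrightarrow> 0) at_bot"
  proof (rule Lim_transform_eventually[OF psi_bot])
    show "\<forall>\<^sub>F x in at_bot. ereal (x ^ 3) * Linf_on \<psi> {3 * x / 2<..<x / 2} = ereal (x ^ 3) * L x"
      using eventually_gt_at_bot[of 0]
    proof eventually_elim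
      case (elim x)
      then have "x - \<bar>x\<bar>/2 = 3*x/2" "x + \<bar>x\<bar>/2 = x/2" by auto
      then show ?case by (simp add: L_def)
    qed
  qed
  have Mlim: "((\<lambda>x. \<bar>x\<bar> ^ 3 * M x) \<longlongrightarrow> 0) at_infinity"
    unfolding at_infinity_eq_at_top_bot M_def
    by (rule filterlim_sup) (rule Mlim_top(1)[OF Ltop], rule Mlim_bot(1)[OF Lbot])
  have Lfin: "\<forall>\<^sub>F x in at_infinity. L x = ereal (real_of_ereal (L x))"
    unfolding at_infinity_eq_at_top_bot eventually_sup
    using Mlim_top(2)[OF Ltop] Mlim_bot(2)[OF Lbot] by blast
  have phlim: "((\<lambda>x. \<bar>x\<bar> * \<phi> x) \<longlongrightarrow> 0) at_infinity"
    unfolding at_infinity_eq_at_top_bot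
    by (rule filterlim_sup) (rule phi_decay_top, rule phi_decay_bot)
  have key: "ereal (lam * (Cbar * ((\<kappa> powr (1 - \<sigma>) - R powr (1 - \<sigma>)) / (\<sigma> - 1)) + integral {-\<kappa>..\<kappa>} \<phi>
          + Cbar * ((\<kappa> powr (1 - \<tau>) - R powr (1 - \<tau>)) / (\<tau> - 1))))
        \<le> Liminf at_infinity (\<lambda>x. ereal (abs x powr (1 + 2 * s) * LK K \<phi> x))"
    if R: "\<kappa> \<le> R" for R
  proof -
    have R0: "0 < R" using R params by simp
    define IR where "IR = integral {-R..R} \<phi>"
    define C1 where "C1 = Lam * (2 * (2 powr (a - 1) / (a - 1)))"
    define C2 where "C2 = Lam * (2 * (1 / 2 powr ((1 - 2 * s) + 1) / ((1 - 2 * s) + 1)))"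
    define Lo where "Lo = (\<lambda>x. lam * (\<bar>x\<bar> / (\<bar>x\<bar> + R)) powr a * IR - (\<bar>x\<bar> * \<phi> x) * C1 - (\<bar>x\<bar> ^ 3 * M x) * C2)"
    have ev: "\<forall>\<^sub>F x in at_infinity. ereal (Lo x) \<le> ereal (abs x powr (1 + 2 * s) * LK K \<phi> x)"
    proof -
      have "\<forall>\<^sub>F x in at_infinity. 2 * R \<le> \<bar>x\<bar>"
        unfolding eventually_at_infinity by (auto intro!: exI[of _ "2 * R"])
      then show ?thesis using Lfin
      proof eventually_elim
        case (elim x)
        note xe = elim
        have x0: "0 < \<bar>x\<bar>" using elim R0 by linarith
        have Mb: "AE y in lborel. y \<in> {x - \<bar>x\<bar>/2<..<x + \<bar>x\<bar>/2} \<longrightarrow> \<bar>\<psi> y\<bar> \<le> M x"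
          using esssup_bound[of "{x - \<bar>x\<bar>/2<..<x + \<bar>x\<bar>/2}" \<psi>, OF greaterThanLessThan_borel]
        proof eventually_elim
          case (elim y)
          show ?case
          proof
            assume "y \<in> {x - \<bar>x\<bar>/2<..<x + \<bar>x\<bar>/2}"
            then have "ereal \<bar>\<psi> y\<bar> \<le> L x" using elim by (simp add: L_def)
            then have "ereal \<bar>\<psi> y\<bar> \<le> ereal (real_of_ereal (L x))" using xe by simp
            then show "\<bar>\<psi> y\<bar> \<le> M x" by (simp add: M_def)
          qed
        qed
        have M0: "0 \<le> M x" by (simp add: M_def)
        have mx: "LK K \<phi> x \<ge> lam * (\<bar>x\<bar> + R) powr (- (1 + 2 * s)) * integral {-R..R} \<phi>
            - \<phi> x * (Lam * (2 * ((\<bar>x\<bar>/2) powr (1 - (1 + 2 * s)) / ((1 + 2 * s) - 1))))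
            - M x * Lam * (2 * ((\<bar>x\<bar>/2) powr ((1 - 2 * s) + 1) / ((1 - 2 * s) + 1)))"
          by (rule main_x[OF s K_meas K_sym lamLam K_bounds d Bd nn psi R0 xe(1) Mb M0])
        have id1: "\<bar>x\<bar> powr a * (\<bar>x\<bar> + R) powr (- a) = (\<bar>x\<bar> / (\<bar>x\<bar> + R)) powr a"
          by (simp add: powr_divide powr_minus_divide)
        have id2: "\<bar>x\<bar> powr a * (\<bar>x\<bar>/2) powr (1 - a) = \<bar>x\<bar> * 2 powr (a - 1)"
        proof -
          have "\<bar>x\<bar> powr a * (\<bar>x\<bar>/2) powr (1 - a) = (\<bar>x\<bar> powr a * \<bar>x\<bar> powr (1 - a)) / 2 powr (1 - a)"
            by (simp add: powr_divide)
          also have "\<bar>x\<bar> powr a * \<bar>x\<bar> powr (1 - a) = \<bar>x\<bar>"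
            using x0 by (simp add: powr_add[symmetric])
          also have "1 / 2 powr (1 - a) = 2 powr (a - 1)"
            by (simp add: powr_minus_divide[symmetric])
          then have "\<bar>x\<bar> / 2 powr (1 - a) = \<bar>x\<bar> * 2 powr (a - 1)"
            by (metis times_divide_eq_right mult_1_right)
          finally show ?thesis .
        qed
        have id3: "\<bar>x\<bar> powr a * (\<bar>x\<bar>/2) powr ((1 - 2 * s) + 1) = \<bar>x\<bar> ^ 3 * (1 / 2 powr ((1 - 2 * s) + 1))"
        proof -
          have "\<bar>x\<bar> powr a * (\<bar>x\<bar>/2) powr ((1 - 2 * s) + 1) = (\<bar>x\<bar> powr a * \<bar>x\<bar> powr ((1 - 2 * s) + 1)) / 2 powr ((1 - 2 * s) + 1)"
            by (simp add: powr_divide)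
          also have "\<bar>x\<bar> powr a * \<bar>x\<bar> powr ((1 - 2 * s) + 1) = \<bar>x\<bar> powr 3"
            using x0 by (simp add: powr_add[symmetric] a_def)
          also have "\<bar>x\<bar> powr 3 = \<bar>x\<bar> ^ 3" using x0 by (simp add: powr_realpow)
          finally show ?thesis by simp
        qed
        have "\<bar>x\<bar> powr a * LK K \<phi> x \<ge> \<bar>x\<bar> powr a * (lam * (\<bar>x\<bar> + R) powr (- a) * IR
            - \<phi> x * (Lam * (2 * ((\<bar>x\<bar>/2) powr (1 - a) / (a - 1))))
            - M x * Lam * (2 * ((\<bar>x\<bar>/2) powr ((1 - 2 * s) + 1) / ((1 - 2 * s) + 1))))"
          using mx unfolding a_def IR_def by (intro mult_left_mono) auto
        also have "\<bar>x\<bar> powr a * (lam * (\<bar>x\<bar> + R) powr (- a) * IR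
            - \<phi> x * (Lam * (2 * ((\<bar>x\<bar>/2) powr (1 - a) / (a - 1))))
            - M x * Lam * (2 * ((\<bar>x\<bar>/2) powr ((1 - 2 * s) + 1) / ((1 - 2 * s) + 1))))
          = lam * (\<bar>x\<bar> powr a * (\<bar>x\<bar> + R) powr (- a)) * IR
            - \<phi> x * (Lam * (2 * ((\<bar>x\<bar> powr a * (\<bar>x\<bar>/2) powr (1 - a)) / (a - 1))))
            - M x * Lam * (2 * ((\<bar>x\<bar> powr a * (\<bar>x\<bar>/2) powr ((1 - 2 * s) + 1)) / ((1 - 2 * s) + 1)))"
          by (simp add: algebra_simps)
        also have "\<dots> = Lo x"
          unfolding id1 id2 id3 Lo_def C1_def C2_def by (simp add: algebra_simps)
        finally show ?case by (simp add: a_def)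
      qed
    qed
    have Lo_lim: "(Lo \<longlongrightarrow> lam * 1 powr a * IR - 0 * C1 - 0 * C2) at_infinity"
      unfolding Lo_def
    proof (intro tendsto_intros phlim Mlim)
      have "((\<lambda>x. 1 - R * inverse (\<bar>x\<bar> + R)) \<longlongrightarrow> 1 - R * 0) at_infinity"
      proof (intro tendsto_intros tendsto_inverse_0_at_top)
        have "filterlim (\<lambda>x::real. R + norm x) at_top at_infinity"
          by (rule filterlim_tendsto_add_at_top[OF tendsto_const filterlim_norm_at_top])
        then show "filterlim (\<lambda>x. \<bar>x\<bar> + R) at_top at_infinity"
          by (simp add: add.commute)
      qed
      moreover have "\<forall>\<^sub>F x in at_infinity. 1 - R * inverse (\<bar>x\<bar> + R) = \<bar>x\<bar> / (\<bar>x\<bar> + R)"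
        using eventually_not_equal_at_infinity[of 0]
      proof eventually_elim
        case (elim x)
        then have "\<bar>x\<bar> + R \<noteq> 0" using R0 by linarith
        then show ?case by (simp add: field_simps)
      qed
      ultimately show "((\<lambda>x. \<bar>x\<bar> / (\<bar>x\<bar> + R)) \<longlongrightarrow> 1) at_infinity"
        by (simp add: Lim_transform_eventually)
    qed simp
    have "Liminf at_infinity (\<lambda>x. ereal (Lo x)) = ereal (lam * IR)"
    proof (rule lim_imp_Liminf)
      show "\<not> trivial_limit (at_infinity :: real filter)"
        using at_top_le_at_infinity trivial_limit_at_top_linorder
        by (metis bot.extremum_uniqueI)
      show "((\<lambda>x. ereal (Lo x)) \<longlongrightarrow> ereal (lam * IR)) at_infinity"
        using Lo_lim by (simp add: lim_ereal)
    qed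
    then have "ereal (lam * IR) \<le> Liminf at_infinity (\<lambda>x. ereal (abs x powr (1 + 2 * s) * LK K \<phi> x))"
      using Liminf_mono[OF ev] by simp
    moreover have "Cbar * ((\<kappa> powr (1 - \<sigma>) - R powr (1 - \<sigma>)) / (\<sigma> - 1)) + integral {-\<kappa>..\<kappa>} \<phi>
          + Cbar * ((\<kappa> powr (1 - \<tau>) - R powr (1 - \<tau>)) / (\<tau> - 1)) \<le> IR"
      unfolding IR_def using IR_lower[OF pc params(2) R params(3,4) phi_left phi_right] .
    then have "ereal (lam * (Cbar * ((\<kappa> powr (1 - \<sigma>) - R powr (1 - \<sigma>)) / (\<sigma> - 1)) + integral {-\<kappa>..\<kappa>} \<phi>
          + Cbar * ((\<kappa> powr (1 - \<tau>) - R powr (1 - \<tau>)) / (\<tau> - 1)))) \<le> ereal (lam * IR)"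
      using lamLam by (simp add: mult_left_mono)
    ultimately show ?thesis by (rule order_trans[rotated])
  qed
  have lim: "((\<lambda>R. ereal (lam * (Cbar * ((\<kappa> powr (1 - \<sigma>) - R powr (1 - \<sigma>)) / (\<sigma> - 1)) + integral {-\<kappa>..\<kappa>} \<phi>
          + Cbar * ((\<kappa> powr (1 - \<tau>) - R powr (1 - \<tau>)) / (\<tau> - 1)))))
        \<longlongrightarrow> ereal (lam * (Cbar * ((\<kappa> powr (1 - \<sigma>) - 0) / (\<sigma> - 1)) + integral {-\<kappa>..\<kappa>} \<phi>
          + Cbar * ((\<kappa> powr (1 - \<tau>) - 0) / (\<tau> - 1))))) at_top"
    using params by (intro tendsto_intros tendsto_neg_powr filterlim_ident) auto
  have "ereal (lam * (Cbar * ((\<kappa> powr (1 - \<sigma>) - 0) / (\<sigma> - 1)) + integral {-\<kappa>..\<kappa>} \<phi>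
          + Cbar * ((\<kappa> powr (1 - \<tau>) - 0) / (\<tau> - 1))))
        \<le> Liminf at_infinity (\<lambda>x. ereal (abs x powr (1 + 2 * s) * LK K \<phi> x))"
  proof (rule tendsto_le[OF _ tendsto_const lim])
    show "\<forall>\<^sub>F R in at_top. ereal (lam * (Cbar * ((\<kappa> powr (1 - \<sigma>) - R powr (1 - \<sigma>)) / (\<sigma> - 1)) + integral {-\<kappa>..\<kappa>} \<phi>
          + Cbar * ((\<kappa> powr (1 - \<tau>) - R powr (1 - \<tau>)) / (\<tau> - 1))))
        \<le> Liminf at_infinity (\<lambda>x. ereal (abs x powr (1 + 2 * s) * LK K \<phi> x))"
      using eventually_ge_at_top[of \<kappa>] by eventually_elim (rule key)
  qed simp
  then show ?thesis by simp
qed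

end
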